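(* For any two policy profiles $\pi,\pi'$ and every player $i$, $$\|v_i(\pi)-v_i(\pi')\|\le\frac{3\sqrt{A_i}}{\zeta^3}\sum_{j\in\mathcal N}\sqrt{A_j}\,\|\pi_j-\pi'_j\|,$$ and consequently $\|v(\pi)-v(\pi')\|\le\frac{3A}{\zeta^3}\|\pi-\pi'\|$ with $A=\sum_{i\in\mathcal N}A_i$.
   Context: Standing setting. Finite $N$-player stochastic game with random stopping: players $\mathcal N$, finite states $\mathcal S$, finite action sets $\mathcal A_i$ with $A_i=|\mathcal A_i|$, $\mathcal A=\prod_i\mathcal A_i$, rewards $r_i:\mathcal S\times\mathcal A\to[-1,1]$, nonnegative transition weights $P(s'\mid s,a)$ with stopping probability $\zeta_{s,a}=1-\sum_{s'}P(s'\mid s,a)$, $\zeta=\min_{s,a}\zeta_{s,a}>0$, initial distribution $\rho$. Policies $\pi_i\in\Delta(\mathcal A_i)^{\mathcal S}\subset\mathbb R^{\mathcal S\times\mathcal A_i}$, Euclidean norms. Episodes: $s_0\sim\rho$; players independently draw $a_{i,t}\sim\pi_i(\cdot\mid s_t)$; stop w.p. $\zeta_{s_t,a_t}$ ($T(\tau)=t$), else move to $s'$ w.p. $P(s'\mid s_t,a_t)$. $V_{i,\rho}(\pi)=\mathbb E_\pi[\sum_{t=0}^{T(\tau)}r_i(s_t,a_t)]$, $v_i(\pi)=\nabla_{\pi_i}V_{i,\rho}(\pi)$ (gradient in player $i$'s own entries), $v=(v_i)_i$. *)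

theory Defs
  imports "HOL-Analysis.Analysis"
begin

text \<open>Players: finite type 'p; states: finite type 's; actions: elements of a common
 type 'a, player i's action set is AS i (finite, nonempty).
 A policy profile is pol :: 'p \<Rightarrow> 's \<Rightarrow> 'a \<Rightarrow> real, player i's entries being
 pol i s b for s a state and b \<in> AS i.\<close>

definition joint_actions :: "('p \<Rightarrow> 'a set) \<Rightarrow> ('p \<Rightarrow> 'a) set" where
  "joint_actions AS = PiE UNIV AS"

definition joint_weight :: "('p::finite \<Rightarrow> 's \<Rightarrow> 'a \<Rightarrow> real) \<Rightarrow> 's \<Rightarrow> ('p \<Rightarrow> 'a) \<Rightarrow> real" where
  "joint_weight pol s a = (\<Prod>i\<in>UNIV. pol i s (a i))"

text \<open>occ t s = probability that the episode has not stopped before time t and s_t = s.\<close>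
fun occ :: "('p::finite \<Rightarrow> 'a set) \<Rightarrow> ('s::finite \<Rightarrow> ('p \<Rightarrow> 'a) \<Rightarrow> 's \<Rightarrow> real)
             \<Rightarrow> ('s \<Rightarrow> real) \<Rightarrow> ('p \<Rightarrow> 's \<Rightarrow> 'a \<Rightarrow> real) \<Rightarrow> nat \<Rightarrow> 's \<Rightarrow> real" where
  "occ AS P rho pol 0 s' = rho s'"
| "occ AS P rho pol (Suc t) s' =
     (\<Sum>s\<in>UNIV. \<Sum>a\<in>joint_actions AS. occ AS P rho pol t s * joint_weight pol s a * P s a s')"

text \<open>Value V_{i,rho}(pol) = E[ sum_{t=0}^{T} r_i(s_t,a_t) ], written out by linearity
 of expectation as a sum over time steps (as a polynomial series in the policy entries).\<close>
definition value_fn :: "('p::finite \<Rightarrow> 'a set) \<Rightarrow> ('s::finite \<Rightarrow> ('p \<Rightarrow> 'a) \<Rightarrow> 's \<Rightarrow> real)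
    \<Rightarrow> ('p \<Rightarrow> 's \<Rightarrow> ('p \<Rightarrow> 'a) \<Rightarrow> real) \<Rightarrow> ('s \<Rightarrow> real) \<Rightarrow> 'p
    \<Rightarrow> ('p \<Rightarrow> 's \<Rightarrow> 'a \<Rightarrow> real) \<Rightarrow> real" where
  "value_fn AS P r rho i pol =
     (\<Sum>t. \<Sum>s\<in>UNIV. \<Sum>a\<in>joint_actions AS. occ AS P rho pol t s * joint_weight pol s a * r i s a)"

definition vgrad :: "('p::finite \<Rightarrow> 'a set) \<Rightarrow> ('s::finite \<Rightarrow> ('p \<Rightarrow> 'a) \<Rightarrow> 's \<Rightarrow> real)
    \<Rightarrow> ('p \<Rightarrow> 's \<Rightarrow> ('p \<Rightarrow> 'a) \<Rightarrow> real) \<Rightarrow> ('s \<Rightarrow> real) \<Rightarrow> 'p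
    \<Rightarrow> ('p \<Rightarrow> 's \<Rightarrow> 'a \<Rightarrow> real) \<Rightarrow> 's \<Rightarrow> 'a \<Rightarrow> real" where
  "vgrad AS P r rho i pol s b =
     deriv (\<lambda>x. value_fn AS P r rho i (pol(i := (pol i)(s := (pol i s)(b := x))))) (pol i s b)"

definition zeta_min :: "('p::finite \<Rightarrow> 'a set) \<Rightarrow> ('s::finite \<Rightarrow> ('p \<Rightarrow> 'a) \<Rightarrow> 's \<Rightarrow> real) \<Rightarrow> real" where
  "zeta_min AS P = Min {1 - (\<Sum>s'\<in>UNIV. P s a s') | s a. a \<in> joint_actions AS}"

definition is_policy :: "('p::finite \<Rightarrow> 'a set) \<Rightarrow> ('p \<Rightarrow> 's::finite \<Rightarrow> 'a \<Rightarrow> real) \<Rightarrow> bool" where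
  "is_policy AS pol \<longleftrightarrow> (\<forall>i s. (\<forall>b\<in>AS i. pol i s b \<ge> 0) \<and> (\<Sum>b\<in>AS i. pol i s b) = 1)"

definition norm_i :: "'a set \<Rightarrow> ('s::finite \<Rightarrow> 'a \<Rightarrow> real) \<Rightarrow> real" where
  "norm_i B f = sqrt (\<Sum>s\<in>UNIV. \<Sum>b\<in>B. (f s b)\<^sup>2)"

definition norm_all :: "('p::finite \<Rightarrow> 'a set) \<Rightarrow> ('p \<Rightarrow> 's::finite \<Rightarrow> 'a \<Rightarrow> real) \<Rightarrow> real" where
  "norm_all AS f = sqrt (\<Sum>i\<in>UNIV. \<Sum>s\<in>UNIV. \<Sum>b\<in>AS i. (f i s b)\<^sup>2)"

end

theory Submission
  imports Defs "HOL-Analysis.Analysis"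
begin


definition l1 :: "('s::finite \<Rightarrow> real) \<Rightarrow> real" where "l1 y = (\<Sum>s\<in>UNIV. \<bar>y s\<bar>)"
definition stepK :: "('s::finite \<Rightarrow> 's \<Rightarrow> real) \<Rightarrow> ('s \<Rightarrow> real) \<Rightarrow> 's \<Rightarrow> real" where
  "stepK K y = (\<lambda>s'. \<Sum>s\<in>UNIV. y s * K s s')"
primrec pw :: "('s::finite \<Rightarrow> 's \<Rightarrow> real) \<Rightarrow> ('s \<Rightarrow> real) \<Rightarrow> nat \<Rightarrow> 's \<Rightarrow> real" where
  "pw K \<mu> 0 = \<mu>" | "pw K \<mu> (Suc t) = stepK K (pw K \<mu> t)"
definition occM :: "('s::finite \<Rightarrow> 's \<Rightarrow> real) \<Rightarrow> ('s \<Rightarrow> real) \<Rightarrow> 's \<Rightarrow> real" where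
  "occM K \<mu> = (\<lambda>s. \<Sum>t. pw K \<mu> t s)"
definition rowb :: "('s::finite \<Rightarrow> 's \<Rightarrow> real) \<Rightarrow> real \<Rightarrow> bool" where
  "rowb K q \<longleftrightarrow> (\<forall>s. (\<Sum>s'\<in>UNIV. \<bar>K s s'\<bar>) \<le> q)"
definition ind :: "'s \<Rightarrow> 's \<Rightarrow> real" where "ind s' = (\<lambda>s. if s = s' then 1 else 0)"

lemma l1_nonneg: "0 \<le> l1 y" by (simp add: l1_def sum_nonneg)
lemma abs_le_l1: "\<bar>y s\<bar> \<le> l1 (y::'s::finite \<Rightarrow> real)"
  unfolding l1_def by (rule member_le_sum) auto
lemma l1_ind[simp]: "l1 (ind s) = 1" by (simp add: l1_def ind_def)

lemma l1_step: assumes "rowb K q" shows "l1 (stepK K y) \<le> q * l1 y"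
proof -
  have "l1 (stepK K y) = (\<Sum>s'\<in>UNIV. \<bar>\<Sum>s\<in>UNIV. y s * K s s'\<bar>)" by (simp add: l1_def stepK_def)
  also have "\<dots> \<le> (\<Sum>s'\<in>UNIV. \<Sum>s\<in>UNIV. \<bar>y s\<bar> * \<bar>K s s'\<bar>)"
    by (intro sum_mono) (metis (no_types, lifting) abs_mult sum.cong sum_abs)
  also have "\<dots> = (\<Sum>s\<in>UNIV. \<bar>y s\<bar> * (\<Sum>s'\<in>UNIV. \<bar>K s s'\<bar>))" by (subst sum.swap) (simp add: sum_distrib_left)
  also have "\<dots> \<le> (\<Sum>s\<in>UNIV. \<bar>y s\<bar> * q)" using assms by (intro sum_mono mult_left_mono) (auto simp: rowb_def)
  also have "\<dots> = q * l1 y" by (simp add: l1_def sum_distrib_left mult.commute)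
  finally show ?thesis .
qed

lemma l1_pw: assumes "rowb K q" "0 \<le> q" shows "l1 (pw K \<mu> t) \<le> q ^ t * l1 \<mu>"
proof (induction t)
  case (Suc t)
  have "l1 (pw K \<mu> (Suc t)) \<le> q * l1 (pw K \<mu> t)" using l1_step[OF assms(1)] by simp
  also have "\<dots> \<le> q * (q ^ t * l1 \<mu>)" using Suc assms(2) by (rule mult_left_mono)
  finally show ?case by simp
qed simp

lemma summable_pw: assumes "rowb K q" "0 \<le> q" "q < 1" shows "summable (\<lambda>t. pw K \<mu> t s)"
proof (rule summable_comparison_test)
  show "\<exists>N. \<forall>n\<ge>N. norm (pw K \<mu> n s) \<le> q ^ n * l1 \<mu>"
    using abs_le_l1 l1_pw[OF assms(1,2)] by (metis order_trans real_norm_def)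
  show "summable (\<lambda>n. q ^ n * l1 \<mu>)" using assms by (intro summable_mult2 summable_geometric) auto
qed

lemma stepK_sum_swap: "(\<Sum>t. stepK K (pw K \<mu> t) s') = stepK K (occM K \<mu>) s'"
  if "\<And>s. summable (\<lambda>t. pw K \<mu> t s)"
proof -
  have "(\<Sum>t. stepK K (pw K \<mu> t) s') = (\<Sum>t. \<Sum>s\<in>UNIV. pw K \<mu> t s * K s s')" by (simp add: stepK_def)
  also have "\<dots> = (\<Sum>s\<in>UNIV. \<Sum>t. pw K \<mu> t s * K s s')"
    by (rule suminf_sum) (intro summable_mult2 that)
  also have "\<dots> = (\<Sum>s\<in>UNIV. occM K \<mu> s * K s s')"
    by (intro sum.cong refl) (simp add: occM_def suminf_mult2[OF that])
  finally show ?thesis by (simp add: stepK_def)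
qed

lemma occM_fix: assumes "rowb K q" "0 \<le> q" "q < 1"
  shows "occM K \<mu> s = \<mu> s + stepK K (occM K \<mu>) s"
proof -
  have sm: "\<And>s. summable (\<lambda>t. pw K \<mu> t s)" using summable_pw[OF assms] .
  have "occM K \<mu> s = pw K \<mu> 0 s + (\<Sum>t. pw K \<mu> (Suc t) s)"
    using suminf_split_head[OF sm[of s]] by (simp add: occM_def)
  also have "(\<Sum>t. pw K \<mu> (Suc t) s) = stepK K (occM K \<mu>) s"
    using stepK_sum_swap[OF sm] by simp
  finally show ?thesis by simp
qed

lemma stepK_diff: "stepK K y s - stepK K z s = stepK K (\<lambda>s. y s - z s) s"
  by (simp add: stepK_def sum_subtractf[symmetric] algebra_simps)

lemma fix_unique: assumes "rowb K q" "0 \<le> q" "q < 1" and y: "\<And>s. y s = \<mu> s + stepK K y s"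
  shows "y = occM K \<mu>"
proof -
  define e where "e = (\<lambda>s. y s - occM K \<mu> s)"
  have "e s = stepK K e s" for s
  proof -
    have "e s = (\<mu> s + stepK K y s) - (\<mu> s + stepK K (occM K \<mu>) s)"
      using y[of s] occM_fix[OF assms(1-3), of \<mu> s] by (simp add: e_def)
    thus ?thesis using stepK_diff[of K y s "occM K \<mu>"] by (simp add: e_def)
  qed
  hence e: "e = stepK K e" by auto
  have "l1 e \<le> q * l1 e" using l1_step[OF assms(1), of e] e by simp
  hence "l1 e \<le> 0" using assms(3) l1_nonneg[of e]
    by (metis diff_ge_0_iff_ge le_minus_iff mult_le_cancel_right1 order.trans not_le)
  hence "\<And>s. e s = 0" using abs_le_l1[of e] by (metis abs_le_zero_iff order_trans)
  thus ?thesis unfolding e_def by auto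
qed

lemma l1_add: "l1 (\<lambda>s. y s + z s) \<le> l1 y + l1 z"
  unfolding l1_def by (simp add: sum.distrib[symmetric] sum_mono abs_triangle_ineq)

lemma l1_occM: assumes "rowb K q" "0 \<le> q" "q < 1"
  shows "l1 (occM K \<mu>) \<le> l1 \<mu> / (1 - q)"
proof -
  have "l1 (occM K \<mu>) \<le> l1 \<mu> + l1 (stepK K (occM K \<mu>))"
  proof -
    have "occM K \<mu> = (\<lambda>s. \<mu> s + stepK K (occM K \<mu>) s)" by (intro ext occM_fix[OF assms])
    hence "l1 (occM K \<mu>) = l1 (\<lambda>s. \<mu> s + stepK K (occM K \<mu>) s)" by simp
    thus ?thesis using l1_add[of \<mu> "stepK K (occM K \<mu>)"] by linarith
  qed
  also have "\<dots> \<le> l1 \<mu> + q * l1 (occM K \<mu>)" using l1_step[OF assms(1)] by simp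
  finally have "(1 - q) * l1 (occM K \<mu>) \<le> l1 \<mu>" by (simp add: algebra_simps)
  thus ?thesis using assms(3) by (simp add: pos_le_divide_eq mult.commute)
qed

lemma pw_nonneg: assumes "\<And>s s'. 0 \<le> K s s'" "\<And>s. 0 \<le> \<mu> s" shows "0 \<le> pw K \<mu> t s"
  using assms by (induction t arbitrary: s) (auto simp: stepK_def intro!: sum_nonneg)

lemma occM_nonneg: assumes "rowb K q" "0 \<le> q" "q < 1" "\<And>s s'. 0 \<le> K s s'" "\<And>s. 0 \<le> \<mu> s"
  shows "0 \<le> occM K \<mu> s"
  unfolding occM_def by (intro suminf_nonneg summable_pw[OF assms(1-3)] pw_nonneg[OF assms(4,5)])

lemma occM_lin: assumes "rowb K q" "0 \<le> q" "q < 1"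
  shows "occM K \<mu> s = (\<Sum>s'\<in>UNIV. \<mu> s' * occM K (ind s') s)"
proof -
  define y where "y = (\<lambda>s. \<Sum>s'\<in>UNIV. \<mu> s' * occM K (ind s') s)"
  have "y s = \<mu> s + stepK K y s" for s
  proof -
    have "y s = (\<Sum>s'\<in>UNIV. \<mu> s' * (ind s' s + stepK K (occM K (ind s')) s))"
      unfolding y_def using occM_fix[OF assms] by metis
    also have "\<dots> = (\<Sum>s'\<in>UNIV. \<mu> s' * ind s' s) + (\<Sum>s'\<in>UNIV. \<mu> s' * stepK K (occM K (ind s')) s)"
      by (simp add: distrib_left sum.distrib)
    also have "(\<Sum>s'\<in>UNIV. \<mu> s' * ind s' s) = \<mu> s" by (simp add: ind_def if_distrib[of "\<lambda>x. _ * x"] cong: if_cong)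
    also have "(\<Sum>s'\<in>UNIV. \<mu> s' * stepK K (occM K (ind s')) s) = stepK K y s"
      unfolding stepK_def y_def sum_distrib_left sum_distrib_right mult.assoc by (rule sum.swap)
    finally show ?thesis .
  qed
  from fix_unique[OF assms this] show ?thesis unfolding y_def by metis
qed

lemma occM_diff: assumes "rowb K q" "0 \<le> q" "q < 1" "rowb K' q'" "0 \<le> q'" "q' < 1"
  shows "occM K \<mu> s - occM K' \<mu> s = occM K' (stepK (\<lambda>s s'. K s s' - K' s s') (occM K \<mu>)) s"
proof -
  define y where "y = (\<lambda>s. occM K \<mu> s - occM K' \<mu> s)"
  have "y s = stepK (\<lambda>s s'. K s s' - K' s s') (occM K \<mu>) s + stepK K' y s" for s
  proof -
    have "y s = stepK K (occM K \<mu>) s - stepK K' (occM K' \<mu>) s"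
      unfolding y_def using occM_fix[OF assms(1-3)] occM_fix[OF assms(4-6)] by (metis add_diff_cancel_left)
    thus ?thesis unfolding y_def stepK_def by (simp add: sum_subtractf[symmetric] algebra_simps sum.distrib[symmetric])
  qed
  from fix_unique[OF assms(4-6) this] show ?thesis by (simp add: y_def fun_eq_iff)
qed



lemma tv_prod:
  fixes p q :: "'i \<Rightarrow> 'b \<Rightarrow> real"
  assumes "finite I" "\<And>j. j \<in> I \<Longrightarrow> finite (B j)"
    and "\<And>j y. j \<in> I \<Longrightarrow> y \<in> B j \<Longrightarrow> 0 \<le> p j y" "\<And>j y. j \<in> I \<Longrightarrow> y \<in> B j \<Longrightarrow> 0 \<le> q j y"
    and "\<And>j. j \<in> I \<Longrightarrow> (\<Sum>y\<in>B j. p j y) = 1" "\<And>j. j \<in> I \<Longrightarrow> (\<Sum>y\<in>B j. q j y) = 1"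
  shows "(\<Sum>g\<in>PiE I B. \<bar>(\<Prod>j\<in>I. p j (g j)) - (\<Prod>j\<in>I. q j (g j))\<bar>) \<le> (\<Sum>j\<in>I. \<Sum>y\<in>B j. \<bar>p j y - q j y\<bar>)"
  using assms
proof (induction I rule: finite_induct)
  case empty
  then show ?case by simp
next
  case (insert k I)
  let ?S = "(\<Sum>g\<in>PiE I B. \<bar>(\<Prod>j\<in>I. p j (g j)) - (\<Prod>j\<in>I. q j (g j))\<bar>)"
  have fin: "finite (PiE I B)" using insert by (simp add: finite_PiE)
  have qsum: "(\<Sum>g\<in>PiE I B. \<Prod>j\<in>I. q j (g j)) = 1"
    using prod_sum_PiE[of I B q] insert by simp
  have "(\<Sum>g\<in>PiE (insert k I) B. \<bar>(\<Prod>j\<in>insert k I. p j (g j)) - (\<Prod>j\<in>insert k I. q j (g j))\<bar>)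
      = (\<Sum>g\<in>PiE (insert k I) B. \<bar>p k (g k) * (\<Prod>j\<in>I. p j (if j = k then undefined else g j))
            - q k (g k) * (\<Prod>j\<in>I. q j (if j = k then undefined else g j))\<bar>)"
  proof -
    have pe: "(\<Prod>j\<in>insert k I. f j (g j)) = f k (g k) * (\<Prod>j\<in>I. f j (if j = k then undefined else g j))"
      for f :: "'i \<Rightarrow> 'b \<Rightarrow> real" and g
    proof -
      have "(\<Prod>j\<in>I. f j (if j = k then undefined else g j)) = (\<Prod>j\<in>I. f j (g j))"
        using insert.hyps by (intro prod.cong) auto
      thus ?thesis using insert.hyps by simp
    qed
    show ?thesis by (simp only: pe)
  qed
  also have "\<dots> = (\<Sum>(y,g)\<in>B k \<times> PiE I B. \<bar>p k y * (\<Prod>j\<in>I. p j (g j)) - q k y * (\<Prod>j\<in>I. q j (g j))\<bar>)"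
    using insert.prems insert.hyps
    by (intro sum.reindex_bij_witness[of _ "\<lambda>(y,g). g(k := y)" "\<lambda>g. (g k, g(k := undefined))"])
       (auto simp: PiE_def extensional_def intro!: arg_cong[where f=abs] arg_cong2[where f="(-)"] arg_cong2[where f="(*)"] prod.cong)
  also have "\<dots> \<le> (\<Sum>(y,g)\<in>B k \<times> PiE I B. p k y * \<bar>(\<Prod>j\<in>I. p j (g j)) - (\<Prod>j\<in>I. q j (g j))\<bar>
                 + \<bar>p k y - q k y\<bar> * (\<Prod>j\<in>I. q j (g j)))"
  proof (intro sum_mono, clarify)
    fix y g assume yg: "y \<in> B k" "g \<in> PiE I B"
    have pk: "0 \<le> p k y" using insert.prems(2) yg by auto
    have qn: "0 \<le> (\<Prod>j\<in>I. q j (g j))" using insert.prems(3) yg by (auto intro!: prod_nonneg simp: PiE_def Pi_def)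
    have "p k y * (\<Prod>j\<in>I. p j (g j)) - q k y * (\<Prod>j\<in>I. q j (g j))
       = p k y * ((\<Prod>j\<in>I. p j (g j)) - (\<Prod>j\<in>I. q j (g j))) + (p k y - q k y) * (\<Prod>j\<in>I. q j (g j))"
      by (simp add: algebra_simps)
    also have "\<bar>\<dots>\<bar> \<le> p k y * \<bar>(\<Prod>j\<in>I. p j (g j)) - (\<Prod>j\<in>I. q j (g j))\<bar> + \<bar>p k y - q k y\<bar> * (\<Prod>j\<in>I. q j (g j))"
      using pk qn by (metis (no_types, lifting) abs_mult abs_of_nonneg abs_triangle_ineq)
    finally show "\<bar>p k y * (\<Prod>j\<in>I. p j (g j)) - q k y * (\<Prod>j\<in>I. q j (g j))\<bar>
      \<le> p k y * \<bar>(\<Prod>j\<in>I. p j (g j)) - (\<Prod>j\<in>I. q j (g j))\<bar> + \<bar>p k y - q k y\<bar> * (\<Prod>j\<in>I. q j (g j))" .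
  qed
  also have "\<dots> = (\<Sum>y\<in>B k. p k y) * ?S + (\<Sum>y\<in>B k. \<bar>p k y - q k y\<bar>) * (\<Sum>g\<in>PiE I B. \<Prod>j\<in>I. q j (g j))"
  proof -
    have "(\<Sum>(y,g)\<in>B k \<times> PiE I B. p k y * \<bar>(\<Prod>j\<in>I. p j (g j)) - (\<Prod>j\<in>I. q j (g j))\<bar>
                 + \<bar>p k y - q k y\<bar> * (\<Prod>j\<in>I. q j (g j)))
       = (\<Sum>y\<in>B k. \<Sum>g\<in>PiE I B. p k y * \<bar>(\<Prod>j\<in>I. p j (g j)) - (\<Prod>j\<in>I. q j (g j))\<bar>
                 + \<bar>p k y - q k y\<bar> * (\<Prod>j\<in>I. q j (g j)))"
      by (simp add: sum.cartesian_product)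
    also have "\<dots> = (\<Sum>y\<in>B k. p k y * ?S + \<bar>p k y - q k y\<bar> * (\<Sum>g\<in>PiE I B. \<Prod>j\<in>I. q j (g j)))"
      by (simp only: sum.distrib sum_distrib_left)
    also have "\<dots> = (\<Sum>y\<in>B k. p k y) * ?S + (\<Sum>y\<in>B k. \<bar>p k y - q k y\<bar>) * (\<Sum>g\<in>PiE I B. \<Prod>j\<in>I. q j (g j))"
      by (simp only: sum.distrib sum_distrib_right)
    finally show ?thesis .
  qed
  also have "\<dots> = ?S + (\<Sum>y\<in>B k. \<bar>p k y - q k y\<bar>)" using insert.prems(4)[of k] qsum by simp
  also have "\<dots> \<le> (\<Sum>j\<in>I. \<Sum>y\<in>B j. \<bar>p j y - q j y\<bar>) + (\<Sum>y\<in>B k. \<bar>p k y - q k y\<bar>)"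
    using insert.IH insert.prems by simp
  finally show ?case using insert.hyps by (simp add: add.commute)
qed



locale game =
  fixes AS :: "'p::finite \<Rightarrow> 'a set" and P :: "'s::finite \<Rightarrow> ('p \<Rightarrow> 'a) \<Rightarrow> 's \<Rightarrow> real"
  assumes AS_fin: "\<And>i. finite (AS i)" and AS_ne: "\<And>i. AS i \<noteq> {}"
    and P_nonneg: "\<And>s a s'. a \<in> joint_actions AS \<Longrightarrow> P s a s' \<ge> 0"
    and zeta_pos: "zeta_min AS P > 0"
begin

abbreviation "JA \<equiv> joint_actions AS"
abbreviation "z \<equiv> zeta_min AS P"

lemma fin_JA: "finite JA" unfolding joint_actions_def using AS_fin by (simp add: finite_PiE)

lemma JA_ne: "JA \<noteq> {}" unfolding joint_actions_def using AS_ne by (simp add: PiE_eq_empty_iff)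

lemma P_row: assumes "a \<in> JA" shows "(\<Sum>s'\<in>UNIV. P s a s') \<le> 1 - z"
proof -
  have fin: "finite {1 - (\<Sum>s'\<in>UNIV. P s a s') | s a. a \<in> JA}"
  proof -
    have "{1 - (\<Sum>s'\<in>UNIV. P s a s') | s a. a \<in> JA} = (\<lambda>(s,a). 1 - (\<Sum>s'\<in>UNIV. P s a s')) ` (UNIV \<times> JA)"
      by auto
    thus ?thesis using fin_JA by simp
  qed
  have "z \<le> 1 - (\<Sum>s'\<in>UNIV. P s a s')" unfolding zeta_min_def
    by (rule Min_le[OF fin]) (use assms in blast)
  thus ?thesis by simp
qed

lemma z_le1: "z \<le> 1"
proof -
  obtain a where "a \<in> JA" using JA_ne by blast
  from P_row[OF this, of undefined] sum_nonneg[of UNIV "P undefined a"] P_nonneg[OF \<open>a \<in> JA\<close>]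
  show ?thesis by force
qed

definition Kw :: "('s \<Rightarrow> ('p \<Rightarrow> 'a) \<Rightarrow> real) \<Rightarrow> 's \<Rightarrow> 's \<Rightarrow> real" where
  "Kw w s s' = (\<Sum>a\<in>JA. w s a * P s a s')"
definition Rw :: "('s \<Rightarrow> ('p \<Rightarrow> 'a) \<Rightarrow> real) \<Rightarrow> ('s \<Rightarrow> ('p \<Rightarrow> 'a) \<Rightarrow> real) \<Rightarrow> 's \<Rightarrow> real" where
  "Rw rr w s = (\<Sum>a\<in>JA. w s a * rr s a)"
definition valw where "valw rr w \<mu> = (\<Sum>s\<in>UNIV. occM (Kw w) \<mu> s * Rw rr w s)"
definition Uw where "Uw rr w s' = valw rr w (ind s')"
definition Hw where "Hw rr w s a = rr s a + (\<Sum>s'\<in>UNIV. P s a s' * Uw rr w s')"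

lemma rowb_Kw: assumes "\<And>s. (\<Sum>a\<in>JA. \<bar>w s a\<bar>) \<le> M" shows "rowb (Kw w) ((1 - z) * M)"
  unfolding rowb_def
proof
  fix s
  have "(\<Sum>s'\<in>UNIV. \<bar>Kw w s s'\<bar>) \<le> (\<Sum>s'\<in>UNIV. \<Sum>a\<in>JA. \<bar>w s a\<bar> * P s a s')"
    unfolding Kw_def by (intro sum_mono order_trans[OF sum_abs]) (simp add: abs_mult P_nonneg)
  also have "\<dots> = (\<Sum>a\<in>JA. \<bar>w s a\<bar> * (\<Sum>s'\<in>UNIV. P s a s'))"
    by (subst sum.swap) (simp add: sum_distrib_left)
  also have "\<dots> \<le> (\<Sum>a\<in>JA. \<bar>w s a\<bar> * (1 - z))" by (intro sum_mono mult_left_mono P_row) auto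
  also have "\<dots> = (1 - z) * (\<Sum>a\<in>JA. \<bar>w s a\<bar>)" by (simp add: sum_distrib_left mult.commute)
  also have "\<dots> \<le> (1 - z) * M" using assms z_le1 by (intro mult_left_mono) auto
  finally show "(\<Sum>s'\<in>UNIV. \<bar>Kw w s s'\<bar>) \<le> (1 - z) * M" .
qed

lemma Kw_diff: "Kw w s s' - Kw w' s s' = Kw (\<lambda>s a. w s a - w' s a) s s'"
  unfolding Kw_def by (simp add: sum_subtractf[symmetric] algebra_simps)

lemma occ_pw: "occ AS P rho pol t = pw (Kw (joint_weight pol)) rho t"
proof (induction t)
  case (Suc t)
  show ?case
    by (rule ext) (simp add: Suc stepK_def Kw_def sum_distrib_left mult.assoc)
qed (simp add: fun_eq_iff)

lemma value_eq: assumes "rowb (Kw (joint_weight pol)) q" "0 \<le> q" "q < 1"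
  shows "value_fn AS P r rho i pol = valw (r i) (joint_weight pol) rho"
proof -
  let ?K = "Kw (joint_weight pol)"
  have sm: "\<And>s. summable (\<lambda>t. pw ?K rho t s)" using summable_pw[OF assms] .
  have "value_fn AS P r rho i pol = (\<Sum>t. \<Sum>s\<in>UNIV. pw ?K rho t s * Rw (r i) (joint_weight pol) s)"
    unfolding value_fn_def occ_pw Rw_def by (simp add: sum_distrib_left mult.assoc)
  also have "\<dots> = (\<Sum>s\<in>UNIV. \<Sum>t. pw ?K rho t s * Rw (r i) (joint_weight pol) s)"
    by (rule suminf_sum) (intro summable_mult2 sm)
  also have "\<dots> = valw (r i) (joint_weight pol) rho"
    unfolding valw_def occM_def by (intro sum.cong refl) (simp add: suminf_mult2[OF sm])
  finally show ?thesis .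
qed

lemma pdl:
  assumes "rowb (Kw w) q" "0 \<le> q" "q < 1" "rowb (Kw w') q'" "0 \<le> q'" "q' < 1"
  shows "valw rr w \<mu> - valw rr w' \<mu> = (\<Sum>s\<in>UNIV. occM (Kw w) \<mu> s * (\<Sum>a\<in>JA. (w s a - w' s a) * Hw rr w' s a))"
proof -
  define d where "d = occM (Kw w) \<mu>"
  define d' where "d' = occM (Kw w') \<mu>"
  define \<nu> where "\<nu> = stepK (\<lambda>s s'. Kw w s s' - Kw w' s s') d"
  have dd: "d s - d' s = occM (Kw w') \<nu> s" for s
    unfolding d_def d'_def \<nu>_def by (rule occM_diff[OF assms])
  have "valw rr w \<mu> - valw rr w' \<mu> = (\<Sum>s\<in>UNIV. d s * Rw rr w s) - (\<Sum>s\<in>UNIV. d' s * Rw rr w' s)"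
    by (simp add: valw_def d_def d'_def)
  also have "\<dots> = (\<Sum>s\<in>UNIV. d s * (Rw rr w s - Rw rr w' s)) + (\<Sum>s\<in>UNIV. (d s - d' s) * Rw rr w' s)"
  proof -
    have "(\<Sum>s\<in>UNIV. d s * (Rw rr w s - Rw rr w' s)) + (\<Sum>s\<in>UNIV. (d s - d' s) * Rw rr w' s)
       = (\<Sum>s\<in>UNIV. d s * (Rw rr w s - Rw rr w' s) + (d s - d' s) * Rw rr w' s)" by (simp only: sum.distrib)
    also have "\<dots> = (\<Sum>s\<in>UNIV. d s * Rw rr w s - d' s * Rw rr w' s)" by (intro sum.cong refl) (simp add: algebra_simps)
    also have "\<dots> = (\<Sum>s\<in>UNIV. d s * Rw rr w s) - (\<Sum>s\<in>UNIV. d' s * Rw rr w' s)" by (simp only: sum_subtractf)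
    finally show ?thesis by simp
  qed
  also have "(\<Sum>s\<in>UNIV. (d s - d' s) * Rw rr w' s) = (\<Sum>s'\<in>UNIV. \<nu> s' * Uw rr w' s')"
  proof -
    have "(\<Sum>s\<in>UNIV. (d s - d' s) * Rw rr w' s) = (\<Sum>s\<in>UNIV. (\<Sum>s'\<in>UNIV. \<nu> s' * occM (Kw w') (ind s') s) * Rw rr w' s)"
      unfolding dd by (simp only: occM_lin[OF assms(4-6), of \<nu>])
    also have "\<dots> = (\<Sum>s'\<in>UNIV. \<nu> s' * Uw rr w' s')"
      unfolding Uw_def valw_def sum_distrib_left sum_distrib_right mult.assoc by (rule sum.swap)
    finally show ?thesis .
  qed
  also have "(\<Sum>s'\<in>UNIV. \<nu> s' * Uw rr w' s') = (\<Sum>s\<in>UNIV. d s * (\<Sum>a\<in>JA. (w s a - w' s a) * (\<Sum>s'\<in>UNIV. P s a s' * Uw rr w' s')))"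
  proof -
    have "(\<Sum>s'\<in>UNIV. \<nu> s' * Uw rr w' s') = (\<Sum>s'\<in>UNIV. \<Sum>s\<in>UNIV. \<Sum>a\<in>JA. d s * (w s a - w' s a) * P s a s' * Uw rr w' s')"
      unfolding \<nu>_def stepK_def Kw_diff by (simp add: Kw_def sum_distrib_left sum_distrib_right mult.assoc)
    also have "\<dots> = (\<Sum>s\<in>UNIV. \<Sum>s'\<in>UNIV. \<Sum>a\<in>JA. d s * (w s a - w' s a) * P s a s' * Uw rr w' s')"
      by (rule sum.swap)
    also have "\<dots> = (\<Sum>s\<in>UNIV. \<Sum>a\<in>JA. \<Sum>s'\<in>UNIV. d s * (w s a - w' s a) * P s a s' * Uw rr w' s')"
      by (intro sum.cong refl sum.swap)
    also have "\<dots> = (\<Sum>s\<in>UNIV. d s * (\<Sum>a\<in>JA. (w s a - w' s a) * (\<Sum>s'\<in>UNIV. P s a s' * Uw rr w' s')))"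
      by (simp add: sum_distrib_left mult.assoc)
    finally show ?thesis .
  qed
  also have "(\<Sum>s\<in>UNIV. d s * (Rw rr w s - Rw rr w' s)) + (\<Sum>s\<in>UNIV. d s * (\<Sum>a\<in>JA. (w s a - w' s a) * (\<Sum>s'\<in>UNIV. P s a s' * Uw rr w' s')))
     = (\<Sum>s\<in>UNIV. d s * (\<Sum>a\<in>JA. (w s a - w' s a) * Hw rr w' s a))"
    unfolding Hw_def Rw_def
    by (simp add: sum.distrib[symmetric] sum_subtractf[symmetric] distrib_left[symmetric] algebra_simps)
  finally show ?thesis by (simp add: d_def)
qed

end


context game begin

lemma z_facts: "0 < z" "z \<le> 1" "0 \<le> 1 - z" "1 - z < 1" using zeta_pos z_le1 by auto

lemma jw_nonneg: assumes "is_policy AS \<sigma>" "a \<in> JA" shows "0 \<le> joint_weight \<sigma> s a"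
  using assms unfolding is_policy_def joint_weight_def joint_actions_def
  by (auto intro!: prod_nonneg simp: PiE_def Pi_def)

lemma jw_sum: assumes "is_policy AS \<sigma>" shows "(\<Sum>a\<in>JA. joint_weight \<sigma> s a) = 1"
proof -
  have "(\<Sum>a\<in>JA. joint_weight \<sigma> s a) = (\<Prod>x\<in>UNIV. \<Sum>y\<in>AS x. \<sigma> x s y)"
    unfolding joint_weight_def joint_actions_def by (rule prod_sum_PiE[symmetric]) (auto simp: AS_fin)
  also have "\<dots> = 1" using assms by (simp add: is_policy_def)
  finally show ?thesis .
qed

lemma jw_abs_sum: assumes "is_policy AS \<sigma>" shows "(\<Sum>a\<in>JA. \<bar>joint_weight \<sigma> s a\<bar>) = 1"
  using jw_sum[OF assms] jw_nonneg[OF assms] by (simp add: abs_of_nonneg)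

lemma rowb_pol: assumes "is_policy AS \<sigma>" shows "rowb (Kw (joint_weight \<sigma>)) (1 - z)"
  using rowb_Kw[of "joint_weight \<sigma>" 1] jw_abs_sum[OF assms] by simp

lemma Kw_nonneg: assumes "is_policy AS \<sigma>" shows "0 \<le> Kw (joint_weight \<sigma>) s s'"
  unfolding Kw_def using jw_nonneg[OF assms] P_nonneg by (auto intro!: sum_nonneg)

definition polx where "polx pol i s0 b x = pol(i := (pol i)(s0 := (pol i s0)(b := x)))"
definition polb where "polb pol i s0 b = pol(i := (pol i)(s0 := ind b))"

lemma polb_policy: assumes "is_policy AS pol" "b \<in> AS i" shows "is_policy AS (polb pol i s0 b)"
  using assms AS_fin[of i] unfolding is_policy_def polb_def ind_def by auto

lemma jw_split: "joint_weight f s a = f i s (a i) * (\<Prod>j\<in>UNIV-{i}. f j s (a j))"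
  unfolding joint_weight_def by (simp add: prod.remove)

lemma jw_polx: "joint_weight (polx pol i s0 b x) s a = joint_weight pol s a
   + (if s = s0 then (x - pol i s0 b) * joint_weight (polb pol i s0 b) s a else 0)"
proof -
  have r1: "(\<Prod>j\<in>UNIV-{i}. polx pol i s0 b x j s (a j)) = (\<Prod>j\<in>UNIV-{i}. pol j s (a j))"
    by (intro prod.cong) (auto simp: polx_def)
  have r2: "(\<Prod>j\<in>UNIV-{i}. polb pol i s0 b j s (a j)) = (\<Prod>j\<in>UNIV-{i}. pol j s (a j))"
    by (intro prod.cong) (auto simp: polb_def)
  show ?thesis unfolding jw_split[of _ s a i] r1 r2
    by (cases "s = s0"; cases "a i = b") (auto simp: polx_def polb_def ind_def algebra_simps)
qed

lemma rowb_polx: assumes "is_policy AS pol" "b \<in> AS i" "\<bar>x - pol i s0 b\<bar> \<le> M"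
  shows "rowb (Kw (joint_weight (polx pol i s0 b x))) ((1 - z) * (1 + M))"
proof (rule rowb_Kw)
  fix s
  have "(\<Sum>a\<in>JA. \<bar>joint_weight (polx pol i s0 b x) s a\<bar>)
     \<le> (\<Sum>a\<in>JA. joint_weight pol s a + \<bar>x - pol i s0 b\<bar> * joint_weight (polb pol i s0 b) s a)"
  proof (intro sum_mono)
    fix a assume a: "a \<in> JA"
    have n: "0 \<le> joint_weight pol s a" "0 \<le> joint_weight (polb pol i s0 b) s a"
      using jw_nonneg[OF assms(1) a] jw_nonneg[OF polb_policy[OF assms(1,2)] a] by auto
    have t: "\<bar>joint_weight pol s a + (x - pol i s0 b) * joint_weight (polb pol i s0 b) s a\<bar>
      \<le> \<bar>joint_weight pol s a\<bar> + \<bar>(x - pol i s0 b) * joint_weight (polb pol i s0 b) s a\<bar>"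
      by (rule abs_triangle_ineq)
    show "\<bar>joint_weight (polx pol i s0 b x) s a\<bar>
        \<le> joint_weight pol s a + \<bar>x - pol i s0 b\<bar> * joint_weight (polb pol i s0 b) s a"
      unfolding jw_polx using t n by (cases "s = s0") (auto simp: abs_mult)
  qed
  also have "\<dots> = 1 + \<bar>x - pol i s0 b\<bar>"
    by (simp add: sum.distrib sum_distrib_left[symmetric] jw_sum assms polb_policy)
  also have "\<dots> \<le> 1 + M" using assms by simp
  finally show "(\<Sum>a\<in>JA. \<bar>joint_weight (polx pol i s0 b x) s a\<bar>) \<le> 1 + M" .
qed

end


context game begin

lemma vgrad_eq:
  assumes pol: "is_policy AS pol" and b: "b \<in> AS i"
  shows "vgrad AS P r rho i pol s0 b = occM (Kw (joint_weight pol)) rho s0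
     * (\<Sum>a\<in>JA. joint_weight (polb pol i s0 b) s0 a * Hw (r i) (joint_weight pol) s0 a)"
proof -
  define x0 where "x0 = pol i s0 b"
  define f where "f x = value_fn AS P r rho i (polx pol i s0 b x)" for x
  define K where "K x = Kw (joint_weight (polx pol i s0 b x))" for x
  define dx where "dx x = occM (K x) rho s0" for x
  define g where "g = (\<Sum>a\<in>JA. joint_weight (polb pol i s0 b) s0 a * Hw (r i) (joint_weight pol) s0 a)"
  define q where "q = (1 - z) * (1 + z)"
  have px0: "polx pol i s0 b x0 = pol" by (simp add: polx_def x0_def)
  have q: "0 \<le> q" "q < 1" using z_facts mult_le_one[of z z] unfolding q_def by (auto simp: algebra_simps)
  have rowx: "rowb (K x) q" if "\<bar>x - x0\<bar> \<le> z" for x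
    unfolding K_def q_def using rowb_polx[OF pol b] that x0_def by blast
  have row0: "rowb (K x0) (1 - z)" unfolding K_def px0 by (rule rowb_pol[OF pol])
  note z = z_facts
  have diffeq: "f x - f x0 = (x - x0) * (dx x * g)" if x: "\<bar>x - x0\<bar> \<le> z" for x
  proof -
    have "f x - f x0 = valw (r i) (joint_weight (polx pol i s0 b x)) rho - valw (r i) (joint_weight pol) rho"
      unfolding f_def px0
      using value_eq[OF rowx[OF x, unfolded K_def] q] value_eq[OF rowb_pol[OF pol] z(3,4)] by simp
    also have "\<dots> = (\<Sum>s\<in>UNIV. occM (K x) rho s * (\<Sum>a\<in>JA. (joint_weight (polx pol i s0 b x) s a - joint_weight pol s a) * Hw (r i) (joint_weight pol) s a))"
      unfolding K_def by (rule pdl[OF rowx[OF x, unfolded K_def] q rowb_pol[OF pol] z(3,4)])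
    also have "\<dots> = (\<Sum>s\<in>UNIV. occM (K x) rho s * (if s = s0 then (x - x0) * g else 0))"
      unfolding jw_polx g_def x0_def by (intro sum.cong refl) (auto simp: sum_distrib_left mult.assoc)
    also have "\<dots> = (x - x0) * (dx x * g)" by (simp add: dx_def if_distrib cong: if_cong)
    finally show ?thesis .
  qed
  define C where "C = l1 rho / z ^ 3"
  have dxb: "\<bar>dx x - dx x0\<bar> \<le> C * \<bar>x - x0\<bar>" if x: "\<bar>x - x0\<bar> \<le> z" for x
  proof -
    define \<nu> where "\<nu> = stepK (\<lambda>s s'. K x s s' - K x0 s s') (occM (K x) rho)"
    have "dx x - dx x0 = occM (K x0) \<nu> s0"
      unfolding dx_def \<nu>_def by (rule occM_diff[OF rowx[OF x] q row0 z(3,4)])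
    hence "\<bar>dx x - dx x0\<bar> \<le> l1 (occM (K x0) \<nu>)" using abs_le_l1 by metis
    also have "\<dots> \<le> l1 \<nu> / (1 - (1 - z))" by (rule l1_occM[OF row0 z(3,4)])
    also have "l1 \<nu> \<le> ((1 - z) * \<bar>x - x0\<bar>) * l1 (occM (K x) rho)"
    proof -
      have "rowb (\<lambda>s s'. K x s s' - K x0 s s') ((1 - z) * \<bar>x - x0\<bar>)"
      proof -
        have "(\<lambda>s s'. K x s s' - K x0 s s') = Kw (\<lambda>s a. joint_weight (polx pol i s0 b x) s a - joint_weight (polx pol i s0 b x0) s a)"
          unfolding K_def Kw_diff by simp
        moreover have "rowb (Kw (\<lambda>s a. joint_weight (polx pol i s0 b x) s a - joint_weight (polx pol i s0 b x0) s a)) ((1 - z) * \<bar>x - x0\<bar>)"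
        proof (rule rowb_Kw)
          fix s
          show "(\<Sum>a\<in>JA. \<bar>joint_weight (polx pol i s0 b x) s a - joint_weight (polx pol i s0 b x0) s a\<bar>) \<le> \<bar>x - x0\<bar>"
          proof (cases "s = s0")
            case True
            have "(\<Sum>a\<in>JA. \<bar>(x - x0) * joint_weight (polb pol i s0 b) s a\<bar>)
               = \<bar>x - x0\<bar> * (\<Sum>a\<in>JA. joint_weight (polb pol i s0 b) s a)"
              using jw_nonneg[OF polb_policy[OF pol b]] by (simp add: abs_mult sum_distrib_left abs_of_nonneg)
            thus ?thesis using True jw_sum[OF polb_policy[OF pol b]] by (simp add: px0 jw_polx flip: x0_def)
          qed (simp add: px0 jw_polx)
        qed
        ultimately show ?thesis by simp
      qed
      thus ?thesis unfolding \<nu>_def by (rule l1_step)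
    qed
    hence "l1 \<nu> / (1 - (1 - z)) \<le> ((1 - z) * \<bar>x - x0\<bar>) * l1 (occM (K x) rho) / z"
      using z by (simp add: divide_right_mono)
    also have "\<dots> \<le> (1 * \<bar>x - x0\<bar>) * (l1 rho / (1 - q)) / z"
      using z l1_occM[OF rowx[OF x] q] l1_nonneg
      by (intro divide_right_mono mult_mono) auto
    also have "\<dots> = C * \<bar>x - x0\<bar>" unfolding C_def q_def by (simp add: power3_eq_cube algebra_simps)
    finally show ?thesis .
  qed
  have lim: "(dx \<longlongrightarrow> dx x0) (at x0)"
  proof (rule LIM_zero_cancel, rule Lim_null_comparison)
    show "\<forall>\<^sub>F x in at x0. norm (dx x - dx x0) \<le> C * \<bar>x - x0\<bar>"
      unfolding eventually_at using z dxb by (intro exI[of _ z]) (auto simp: dist_real_def)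
    have "((\<lambda>x. C * \<bar>x - x0\<bar>) \<longlongrightarrow> C * \<bar>x0 - x0\<bar>) (at x0)" by (intro tendsto_intros)
    thus "((\<lambda>x. C * \<bar>x - x0\<bar>) \<longlongrightarrow> 0) (at x0)" by simp
  qed
  have "(f has_field_derivative dx x0 * g) (at x0)"
    unfolding has_field_derivative_iff
  proof (rule Lim_transform_eventually)
    show "((\<lambda>x. dx x * g) \<longlongrightarrow> dx x0 * g) (at x0)" by (intro tendsto_intros lim)
    show "\<forall>\<^sub>F x in at x0. dx x * g = (f x - f x0) / (x - x0)"
      unfolding eventually_at using z diffeq by (intro exI[of _ z]) (auto simp: dist_real_def)
  qed
  hence "deriv f x0 = dx x0 * g" by (rule DERIV_imp_deriv)
  moreover have "vgrad AS P r rho i pol s0 b = deriv f x0"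
    unfolding vgrad_def f_def polx_def x0_def ..
  ultimately show ?thesis unfolding dx_def g_def K_def px0 by simp
qed

end


lemma sum_abs_bound:
  assumes "\<And>x. x \<in> A \<Longrightarrow> \<bar>g x\<bar> \<le> B"
  shows "\<bar>\<Sum>x\<in>A. f x * g x\<bar> \<le> (\<Sum>x\<in>A. \<bar>f x\<bar>) * (B::real)"
proof -
  have "\<bar>\<Sum>x\<in>A. f x * g x\<bar> \<le> (\<Sum>x\<in>A. \<bar>f x\<bar> * \<bar>g x\<bar>)" by (rule order_trans[OF sum_abs]) (simp add: abs_mult)
  also have "\<dots> \<le> (\<Sum>x\<in>A. \<bar>f x\<bar> * B)" using assms by (intro sum_mono mult_left_mono) auto
  finally show ?thesis by (simp add: sum_distrib_right)
qed

definition Ds :: "('p::finite \<Rightarrow> 'a set) \<Rightarrow> ('p \<Rightarrow> 's \<Rightarrow> 'a \<Rightarrow> real) \<Rightarrow> ('p \<Rightarrow> 's \<Rightarrow> 'a \<Rightarrow> real) \<Rightarrow> 's \<Rightarrow> real" where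
  "Ds AS pa pb s = (\<Sum>j\<in>UNIV. \<Sum>y\<in>AS j. \<bar>pa j s y - pb j s y\<bar>)"

context game begin

lemma occ_nn: assumes "is_policy AS \<sigma>" "\<And>s. 0 \<le> \<mu> s" shows "0 \<le> occM (Kw (joint_weight \<sigma>)) \<mu> s"
  by (rule occM_nonneg[OF rowb_pol[OF assms(1)] z_facts(3,4) Kw_nonneg[OF assms(1)] assms(2)])

lemma occ_l1: assumes "is_policy AS \<sigma>" shows "l1 (occM (Kw (joint_weight \<sigma>)) \<mu>) \<le> l1 \<mu> / z"
  using l1_occM[OF rowb_pol[OF assms(1)] z_facts(3,4)] by simp

lemma R_bound: assumes "is_policy AS \<sigma>" "\<And>s a. a \<in> JA \<Longrightarrow> \<bar>rr s a\<bar> \<le> 1"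
  shows "\<bar>Rw rr (joint_weight \<sigma>) s\<bar> \<le> 1"
  unfolding Rw_def using sum_abs_bound[of JA "rr s" 1 "joint_weight \<sigma> s"] assms jw_abs_sum[OF assms(1)] by simp

lemma U_bound: assumes "is_policy AS \<sigma>" "\<And>s a. a \<in> JA \<Longrightarrow> \<bar>rr s a\<bar> \<le> 1"
  shows "\<bar>Uw rr (joint_weight \<sigma>) s'\<bar> \<le> 1 / z"
proof -
  have "\<bar>Uw rr (joint_weight \<sigma>) s'\<bar> \<le> l1 (occM (Kw (joint_weight \<sigma>)) (ind s')) * 1"
    unfolding Uw_def valw_def l1_def by (rule sum_abs_bound) (rule R_bound[OF assms])
  also have "\<dots> \<le> 1 / z" using occ_l1[OF assms(1), of "ind s'"] by simp
  finally show ?thesis .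
qed

lemma H_bound: assumes "is_policy AS \<sigma>" "\<And>s a. a \<in> JA \<Longrightarrow> \<bar>rr s a\<bar> \<le> 1" "a \<in> JA"
  shows "\<bar>Hw rr (joint_weight \<sigma>) s a\<bar> \<le> 1 / z"
proof -
  have h1: "\<bar>Hw rr (joint_weight \<sigma>) s a\<bar> \<le> \<bar>rr s a\<bar> + \<bar>\<Sum>s'\<in>UNIV. P s a s' * Uw rr (joint_weight \<sigma>) s'\<bar>"
    unfolding Hw_def by (rule abs_triangle_ineq)
  have h2: "\<bar>\<Sum>s'\<in>UNIV. P s a s' * Uw rr (joint_weight \<sigma>) s'\<bar> \<le> (\<Sum>s'\<in>UNIV. \<bar>P s a s'\<bar>) * (1 / z)"
    by (rule sum_abs_bound) (rule U_bound[OF assms(1,2)])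
  have h3: "(\<Sum>s'\<in>UNIV. \<bar>P s a s'\<bar>) = (\<Sum>s'\<in>UNIV. P s a s')" using P_nonneg[OF assms(3)] by simp
  have h4: "\<bar>rr s a\<bar> + (\<Sum>s'\<in>UNIV. P s a s') * (1 / z) \<le> 1 + (1 - z) * (1 / z)"
    using assms(2,3) P_row[OF assms(3), of s] z_facts
    by (intro add_mono mult_right_mono) auto
  have h5: "1 + (1 - z) * (1 / z) = 1 / z" using z_facts by (simp add: field_simps)
  have h2': "\<bar>\<Sum>s'\<in>UNIV. P s a s' * Uw rr (joint_weight \<sigma>) s'\<bar> \<le> (\<Sum>s'\<in>UNIV. P s a s') * (1 / z)"
    using h2 unfolding h3 .
  show ?thesis using h1 h2' h4 h5 by linarith
qed

lemma TV: assumes "is_policy AS qa" "is_policy AS qb"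
  shows "(\<Sum>a\<in>JA. \<bar>joint_weight qa s a - joint_weight qb s a\<bar>) \<le> Ds AS qa qb s"
  unfolding joint_weight_def joint_actions_def Ds_def
  by (rule tv_prod) (use assms AS_fin in \<open>auto simp: is_policy_def\<close>)

lemma TVb: assumes "is_policy AS qa" "is_policy AS qb" "b \<in> AS i"
  shows "(\<Sum>a\<in>JA. \<bar>joint_weight (polb qa i s b) s a - joint_weight (polb qb i s b) s a\<bar>) \<le> Ds AS qa qb s"
proof -
  have "(\<Sum>a\<in>JA. \<bar>joint_weight (polb qa i s b) s a - joint_weight (polb qb i s b) s a\<bar>) \<le> Ds AS (polb qa i s b) (polb qb i s b) s"
    by (rule TV[OF polb_policy[OF assms(1,3)] polb_policy[OF assms(2,3)]])
  also have "\<dots> \<le> Ds AS qa qb s"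
    unfolding Ds_def by (intro sum_mono) (auto simp: polb_def)
  finally show ?thesis .
qed

lemma Ds_nonneg: "0 \<le> Ds AS qa qb s" unfolding Ds_def by (auto intro!: sum_nonneg)

end

locale two = game AS P for AS :: "'p::finite \<Rightarrow> 'a set" and P :: "'s::finite \<Rightarrow> ('p \<Rightarrow> 'a) \<Rightarrow> 's \<Rightarrow> real" +
  fixes rr :: "'s \<Rightarrow> ('p \<Rightarrow> 'a) \<Rightarrow> real" and pa pb :: "'p \<Rightarrow> 's \<Rightarrow> 'a \<Rightarrow> real" and Dt :: real
  assumes rr_b: "\<And>s a. a \<in> joint_actions AS \<Longrightarrow> \<bar>rr s a\<bar> \<le> 1"
    and pa: "is_policy AS pa" and pb: "is_policy AS pb"
    and Dt: "\<And>s. Ds AS pa pb s \<le> Dt"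
begin

abbreviation "w \<equiv> joint_weight pa"
abbreviation "w' \<equiv> joint_weight pb"

lemma Dt_nonneg: "0 \<le> Dt" using Ds_nonneg[of pa pb undefined] Dt[of undefined] by linarith

lemma TVD: "(\<Sum>a\<in>JA. \<bar>w s a - w' s a\<bar>) \<le> Dt" using TV[OF pa pb, of s] Dt[of s] by linarith

lemma rowb_diff: "rowb (\<lambda>s s'. Kw w s s' - Kw w' s s') ((1 - z) * Dt)"
  unfolding Kw_diff by (rule rowb_Kw) (rule TVD)

lemma E2: assumes "\<And>s. 0 \<le> \<mu> s"
  shows "l1 (\<lambda>s. occM (Kw w) \<mu> s - occM (Kw w') \<mu> s) \<le> Dt * l1 \<mu> / z ^ 2"
proof -
  define \<nu> where "\<nu> = stepK (\<lambda>s s'. Kw w s s' - Kw w' s s') (occM (Kw w) \<mu>)"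
  have eq: "(\<lambda>s. occM (Kw w) \<mu> s - occM (Kw w') \<mu> s) = occM (Kw w') \<nu>"
    unfolding \<nu>_def by (rule ext, rule occM_diff[OF rowb_pol[OF pa] z_facts(3,4) rowb_pol[OF pb] z_facts(3,4)])
  have h1: "l1 (occM (Kw w') \<nu>) \<le> l1 \<nu> / z" by (rule occ_l1[OF pb])
  have h2: "l1 \<nu> \<le> ((1 - z) * Dt) * l1 (occM (Kw w) \<mu>)" unfolding \<nu>_def by (rule l1_step[OF rowb_diff])
  have h3: "((1 - z) * Dt) * l1 (occM (Kw w) \<mu>) \<le> (1 * Dt) * (l1 \<mu> / z)"
    using occ_l1[OF pa, of \<mu>] z_facts Dt_nonneg l1_nonneg by (intro mult_mono) auto
  have "l1 \<nu> / z \<le> (Dt * (l1 \<mu> / z)) / z" using h2 h3 z_facts by (intro divide_right_mono) auto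
  also have "\<dots> = Dt * l1 \<mu> / z ^ 2" by (simp add: power2_eq_square)
  finally show ?thesis using eq h1 by simp
qed

lemma EU: "\<bar>Uw rr w s' - Uw rr w' s'\<bar> \<le> Dt / z ^ 2"
proof -
  have E: "Uw rr w s' - Uw rr w' s' = (\<Sum>s\<in>UNIV. occM (Kw w) (ind s') s * (\<Sum>a\<in>JA. (w s a - w' s a) * Hw rr w' s a))"
    unfolding Uw_def by (rule pdl[OF rowb_pol[OF pa] z_facts(3,4) rowb_pol[OF pb] z_facts(3,4)])
  have h1: "\<bar>\<Sum>s\<in>UNIV. occM (Kw w) (ind s') s * (\<Sum>a\<in>JA. (w s a - w' s a) * Hw rr w' s a)\<bar>
      \<le> l1 (occM (Kw w) (ind s')) * (Dt * (1 / z))"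
    unfolding l1_def
  proof (rule sum_abs_bound)
    fix s
    have "\<bar>\<Sum>a\<in>JA. (w s a - w' s a) * Hw rr w' s a\<bar> \<le> (\<Sum>a\<in>JA. \<bar>w s a - w' s a\<bar>) * (1 / z)"
      by (rule sum_abs_bound) (rule H_bound[OF pb rr_b])
    also have "\<dots> \<le> Dt * (1 / z)" using TVD z_facts by (intro mult_right_mono) auto
    finally show "\<bar>\<Sum>a\<in>JA. (w s a - w' s a) * Hw rr w' s a\<bar> \<le> Dt * (1 / z)" .
  qed
  have h2: "l1 (occM (Kw w) (ind s')) * (Dt * (1 / z)) \<le> (1 / z) * (Dt * (1 / z))"
    using occ_l1[OF pa, of "ind s'"] Dt_nonneg z_facts by (intro mult_right_mono) auto
  have h3: "(1 / z) * (Dt * (1 / z)) = Dt / z ^ 2" by (simp add: power2_eq_square)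
  show ?thesis unfolding E using h1 h2 h3 by linarith
qed

lemma EH: assumes "a \<in> JA" shows "\<bar>Hw rr w s a - Hw rr w' s a\<bar> \<le> Dt / z ^ 2"
proof -
  have E: "Hw rr w s a - Hw rr w' s a = (\<Sum>s'\<in>UNIV. P s a s' * (Uw rr w s' - Uw rr w' s'))"
    unfolding Hw_def by (simp add: sum_subtractf[symmetric] right_diff_distrib)
  have h1: "\<bar>\<Sum>s'\<in>UNIV. P s a s' * (Uw rr w s' - Uw rr w' s')\<bar> \<le> (\<Sum>s'\<in>UNIV. \<bar>P s a s'\<bar>) * (Dt / z ^ 2)"
    by (rule sum_abs_bound) (rule EU)
  have h2: "(\<Sum>s'\<in>UNIV. \<bar>P s a s'\<bar>) = (\<Sum>s'\<in>UNIV. P s a s')" using P_nonneg[OF assms] by simp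
  have h3: "(\<Sum>s'\<in>UNIV. P s a s') * (Dt / z ^ 2) \<le> 1 * (Dt / z ^ 2)"
    using P_row[OF assms, of s] z_facts Dt_nonneg by (intro mult_right_mono) auto
  show ?thesis unfolding E using h1 h3 unfolding h2 by linarith
qed

definition gg where "gg \<sigma> i s b = (\<Sum>a\<in>JA. joint_weight (polb \<sigma> i s b) s a * Hw rr (joint_weight \<sigma>) s a)"

lemma gg_bound: assumes "is_policy AS \<sigma>" "b \<in> AS i" shows "\<bar>gg \<sigma> i s b\<bar> \<le> 1 / z"
proof -
  have "\<bar>gg \<sigma> i s b\<bar> \<le> (\<Sum>a\<in>JA. \<bar>joint_weight (polb \<sigma> i s b) s a\<bar>) * (1 / z)"
    unfolding gg_def by (rule sum_abs_bound) (rule H_bound[OF assms(1) rr_b])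
  thus ?thesis using jw_abs_sum[OF polb_policy[OF assms]] by simp
qed

lemma Eg: assumes "b \<in> AS i" shows "\<bar>gg pa i s b - gg pb i s b\<bar> \<le> Dt / z + Dt / z ^ 2"
proof -
  let ?wb = "joint_weight (polb pa i s b)" and ?wb' = "joint_weight (polb pb i s b)"
  have E: "gg pa i s b - gg pb i s b = (\<Sum>a\<in>JA. (?wb s a - ?wb' s a) * Hw rr w s a) + (\<Sum>a\<in>JA. ?wb' s a * (Hw rr w s a - Hw rr w' s a))"
  proof -
    have "(\<Sum>a\<in>JA. (?wb s a - ?wb' s a) * Hw rr w s a) + (\<Sum>a\<in>JA. ?wb' s a * (Hw rr w s a - Hw rr w' s a))
       = (\<Sum>a\<in>JA. (?wb s a - ?wb' s a) * Hw rr w s a + ?wb' s a * (Hw rr w s a - Hw rr w' s a))"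
      by (simp only: sum.distrib)
    also have "\<dots> = (\<Sum>a\<in>JA. ?wb s a * Hw rr w s a - ?wb' s a * Hw rr w' s a)"
      by (intro sum.cong refl) (simp add: algebra_simps)
    also have "\<dots> = gg pa i s b - gg pb i s b" unfolding gg_def by (simp only: sum_subtractf)
    finally show ?thesis by simp
  qed
  have t: "\<bar>(\<Sum>a\<in>JA. (?wb s a - ?wb' s a) * Hw rr w s a) + (\<Sum>a\<in>JA. ?wb' s a * (Hw rr w s a - Hw rr w' s a))\<bar>
     \<le> \<bar>\<Sum>a\<in>JA. (?wb s a - ?wb' s a) * Hw rr w s a\<bar> + \<bar>\<Sum>a\<in>JA. ?wb' s a * (Hw rr w s a - Hw rr w' s a)\<bar>"
    by (rule abs_triangle_ineq)
  have h1: "\<bar>\<Sum>a\<in>JA. (?wb s a - ?wb' s a) * Hw rr w s a\<bar> \<le> (\<Sum>a\<in>JA. \<bar>?wb s a - ?wb' s a\<bar>) * (1 / z)"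
    by (rule sum_abs_bound) (rule H_bound[OF pa rr_b])
  have h2: "(\<Sum>a\<in>JA. \<bar>?wb s a - ?wb' s a\<bar>) * (1 / z) \<le> Dt * (1 / z)"
    using TVb[OF pa pb assms, of s] Dt[of s] z_facts by (intro mult_right_mono) auto
  have h3: "\<bar>\<Sum>a\<in>JA. ?wb' s a * (Hw rr w s a - Hw rr w' s a)\<bar> \<le> (\<Sum>a\<in>JA. \<bar>?wb' s a\<bar>) * (Dt / z ^ 2)"
    by (rule sum_abs_bound) (rule EH)
  have h4: "(\<Sum>a\<in>JA. \<bar>?wb' s a\<bar>) = 1" by (rule jw_abs_sum[OF polb_policy[OF pb assms]])
  show ?thesis unfolding E using t h1 h2 h3 unfolding h4 by simp
qed

end


context two begin

lemma final_i:
  assumes rr: "rr = r i" and rho_nn: "\<And>s. 0 \<le> rho s" and rho1: "l1 rho = 1"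
  shows "norm_i (AS i) (\<lambda>s b. vgrad AS P r rho i pa s b - vgrad AS P r rho i pb s b)
     \<le> 3 * sqrt (real (card (AS i))) / z ^ 3 * Dt"
proof -
  define d where "d = occM (Kw w) rho"
  define d' where "d' = occM (Kw w') rho"
  define \<alpha> where "\<alpha> s = \<bar>d s - d' s\<bar> * (1 / z) + d' s * (Dt / z + Dt / z ^ 2)" for s
  have d'nn: "0 \<le> d' s" for s unfolding d'_def by (rule occ_nn[OF pb rho_nn])
  have \<alpha>nn: "0 \<le> \<alpha> s" for s unfolding \<alpha>_def using d'nn z_facts Dt_nonneg by simp
  have v: "vgrad AS P r rho i \<sigma> s b = occM (Kw (joint_weight \<sigma>)) rho s * gg \<sigma> i s b"
    if "is_policy AS \<sigma>" "b \<in> AS i" for \<sigma> s b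
    using vgrad_eq[OF that] unfolding gg_def by (simp add: rr)
  have pt: "\<bar>vgrad AS P r rho i pa s b - vgrad AS P r rho i pb s b\<bar> \<le> \<alpha> s" if b: "b \<in> AS i" for s b
  proof -
    have E: "vgrad AS P r rho i pa s b - vgrad AS P r rho i pb s b
        = (d s - d' s) * gg pa i s b + d' s * (gg pa i s b - gg pb i s b)"
      unfolding v[OF pa b] v[OF pb b] d_def d'_def by (simp add: algebra_simps)
    have "\<bar>(d s - d' s) * gg pa i s b + d' s * (gg pa i s b - gg pb i s b)\<bar>
        \<le> \<bar>d s - d' s\<bar> * \<bar>gg pa i s b\<bar> + d' s * \<bar>gg pa i s b - gg pb i s b\<bar>"
      using abs_triangle_ineq[of "(d s - d' s) * gg pa i s b" "d' s * (gg pa i s b - gg pb i s b)"] d'nn[of s]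
      by (simp add: abs_mult)
    also have "\<dots> \<le> \<bar>d s - d' s\<bar> * (1 / z) + d' s * (Dt / z + Dt / z ^ 2)"
      using gg_bound[OF pa b, of s] Eg[OF b, of s] d'nn[of s]
      by (intro add_mono mult_left_mono) auto
    finally show ?thesis unfolding E \<alpha>_def .
  qed
  have sum\<alpha>: "(\<Sum>s\<in>UNIV. \<alpha> s) \<le> 3 * Dt / z ^ 3"
  proof -
    have "(\<Sum>s\<in>UNIV. \<alpha> s) = l1 (\<lambda>s. d s - d' s) * (1 / z) + l1 d' * (Dt / z + Dt / z ^ 2)"
      unfolding \<alpha>_def l1_def using d'nn by (simp add: sum.distrib sum_distrib_right sum_divide_distrib)
    also have "\<dots> \<le> (Dt * 1 / z ^ 2) * (1 / z) + (1 / z) * (Dt / z + Dt / z ^ 2)"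
      using E2[of rho, OF rho_nn] occ_l1[OF pb, of rho] rho1 z_facts Dt_nonneg unfolding d_def d'_def
      by (intro add_mono mult_right_mono) auto
    also have "\<dots> = 2 * Dt / z ^ 3 + Dt / z ^ 2" using z_facts by (simp add: field_simps power3_eq_cube power2_eq_square)
    also have "Dt / z ^ 2 \<le> Dt / z ^ 3"
      using z_facts Dt_nonneg by (intro divide_left_mono mult_pos_pos) (auto simp: power_decreasing)
    hence "2 * Dt / z ^ 3 + Dt / z ^ 2 \<le> 3 * Dt / z ^ 3" by simp
    finally show ?thesis .
  qed
  have "norm_i (AS i) (\<lambda>s b. vgrad AS P r rho i pa s b - vgrad AS P r rho i pb s b)
      \<le> sqrt (\<Sum>s\<in>UNIV. \<Sum>b\<in>AS i. (\<alpha> s)\<^sup>2)"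
    unfolding norm_i_def
  proof (intro real_sqrt_le_mono sum_mono)
    fix s b assume "b \<in> AS i"
    from power_mono[OF pt[OF this, of s] abs_ge_zero, of 2]
    show "(vgrad AS P r rho i pa s b - vgrad AS P r rho i pb s b)\<^sup>2 \<le> (\<alpha> s)\<^sup>2"
      by simp
  qed
  also have "(\<Sum>s\<in>UNIV. \<Sum>b\<in>AS i. (\<alpha> s)\<^sup>2) = real (card (AS i)) * (\<Sum>s\<in>UNIV. (\<alpha> s)\<^sup>2)"
    by (simp add: sum_distrib_left)
  also have "sqrt \<dots> = sqrt (real (card (AS i))) * L2_set \<alpha> UNIV"
    by (simp add: L2_set_def real_sqrt_mult)
  also have "\<dots> \<le> sqrt (real (card (AS i))) * (\<Sum>s\<in>UNIV. \<alpha> s)"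
    by (intro mult_left_mono L2_set_le_sum \<alpha>nn) auto
  also have "\<dots> \<le> sqrt (real (card (AS i))) * (3 * Dt / z ^ 3)"
    by (intro mult_left_mono sum\<alpha>) auto
  finally show ?thesis by (simp add: mult_ac)
qed

end


lemma sum_abs_le_sqrt_card:
  fixes f :: "'b \<Rightarrow> real"
  shows "(\<Sum>y\<in>A. \<bar>f y\<bar>) \<le> sqrt (real (card A)) * sqrt (\<Sum>y\<in>A. (f y)\<^sup>2)"
proof -
  have "(\<Sum>y\<in>A. \<bar>f y\<bar>) = (\<Sum>y\<in>A. \<bar>(\<lambda>_. 1::real) y\<bar> * \<bar>f y\<bar>)" by simp
  also have "\<dots> \<le> L2_set (\<lambda>_. 1::real) A * L2_set f A" by (rule L2_set_mult_ineq)
  also have "\<dots> = sqrt (real (card A)) * sqrt (\<Sum>y\<in>A. (f y)\<^sup>2)"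
    by (simp add: L2_set_constant L2_set_def)
  finally show ?thesis .
qed

lemma t1: fixes a A n z :: real assumes "0 \<le> a" "0 \<le> A" "0 < z"
  shows "(3 * sqrt a / z ^ 3 * (sqrt A * n))\<^sup>2 = 9 * a * A * n\<^sup>2 / z ^ 6"
proof -
  have "(3 * sqrt a / z ^ 3 * (sqrt A * n))\<^sup>2 = 9 * (sqrt a)\<^sup>2 * (sqrt A)\<^sup>2 * n\<^sup>2 / (z ^ 3)\<^sup>2"
    by (simp add: power_mult_distrib power_divide)
  also have "\<dots> = 9 * a * A * n\<^sup>2 / z ^ 6" using assms by (simp add: power_mult[symmetric])
  finally show ?thesis .
qed
lemma t2: fixes c :: "'i::finite \<Rightarrow> real" and A n z :: real assumes "A = (\<Sum>i\<in>UNIV. c i)"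
  shows "(\<Sum>i\<in>UNIV. 9 * c i * A * n\<^sup>2 / z ^ 6) = (3 * A / z ^ 3 * n)\<^sup>2"
proof -
  have "(\<Sum>i\<in>UNIV. 9 * c i * A * n\<^sup>2 / z ^ 6) = 9 * (\<Sum>i\<in>UNIV. c i) * A * n\<^sup>2 / z ^ 6"
    by (simp add: sum_divide_distrib[symmetric] sum_distrib_left[symmetric] sum_distrib_right[symmetric] mult.assoc)
  also have "\<dots> = (3 * A / z ^ 3 * n)\<^sup>2" using assms
    by (simp add: power_mult_distrib power_divide power_mult[symmetric] power2_eq_square)
  finally show ?thesis .
qed

theorem lemmaE8:
  fixes AS :: "'p::finite \<Rightarrow> 'a set"
    and P :: "'s::finite \<Rightarrow> ('p \<Rightarrow> 'a) \<Rightarrow> 's \<Rightarrow> real"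
    and r :: "'p \<Rightarrow> 's \<Rightarrow> ('p \<Rightarrow> 'a) \<Rightarrow> real"
    and rho :: "'s \<Rightarrow> real"
    and pol pol' :: "'p \<Rightarrow> 's \<Rightarrow> 'a \<Rightarrow> real"
  assumes AS_fin: "\<And>i. finite (AS i)" and AS_ne: "\<And>i. AS i \<noteq> {}"
    and r_bound: "\<And>i s a. a \<in> joint_actions AS \<Longrightarrow> \<bar>r i s a\<bar> \<le> 1"
    and P_nonneg: "\<And>s a s'. a \<in> joint_actions AS \<Longrightarrow> P s a s' \<ge> 0"
    and zeta_pos: "zeta_min AS P > 0"
    and rho_nonneg: "\<And>s. rho s \<ge> 0" and rho_sum: "(\<Sum>s\<in>UNIV. rho s) = 1"
    and pol: "is_policy AS pol" and pol': "is_policy AS pol'"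
  shows "(\<forall>i. norm_i (AS i) (\<lambda>s b. vgrad AS P r rho i pol s b - vgrad AS P r rho i pol' s b)
              \<le> 3 * sqrt (real (card (AS i))) / (zeta_min AS P) ^ 3
                 * (\<Sum>j\<in>UNIV. sqrt (real (card (AS j))) * norm_i (AS j) (\<lambda>s b. pol j s b - pol' j s b)))
       \<and> norm_all AS (\<lambda>i s b. vgrad AS P r rho i pol s b - vgrad AS P r rho i pol' s b)
              \<le> 3 * real (\<Sum>i\<in>UNIV. card (AS i)) / (zeta_min AS P) ^ 3
                 * norm_all AS (\<lambda>i s b. pol i s b - pol' i s b)"
proof -
  interpret game AS P using AS_fin AS_ne P_nonneg zeta_pos by unfold_locales
  define nd where "nd j = norm_i (AS j) (\<lambda>s b. pol j s b - pol' j s b)" for j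
  define Dt where "Dt = (\<Sum>j\<in>UNIV. sqrt (real (card (AS j))) * nd j)"
  have Ds: "Ds AS pol pol' s \<le> Dt" for s
    unfolding Ds_def Dt_def
  proof (rule sum_mono)
    fix j :: 'p
    have "(\<Sum>y\<in>AS j. \<bar>pol j s y - pol' j s y\<bar>) \<le> sqrt (real (card (AS j))) * sqrt (\<Sum>y\<in>AS j. (pol j s y - pol' j s y)\<^sup>2)"
      by (rule sum_abs_le_sqrt_card)
    also have "sqrt (\<Sum>y\<in>AS j. (pol j s y - pol' j s y)\<^sup>2) \<le> nd j"
      unfolding nd_def norm_i_def
      by (intro real_sqrt_le_mono member_le_sum) (auto intro!: sum_nonneg)
    hence "sqrt (real (card (AS j))) * sqrt (\<Sum>y\<in>AS j. (pol j s y - pol' j s y)\<^sup>2) \<le> sqrt (real (card (AS j))) * nd j"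
      by (intro mult_left_mono) auto
    finally show "(\<Sum>y\<in>AS j. \<bar>pol j s y - pol' j s y\<bar>) \<le> sqrt (real (card (AS j))) * nd j" .
  qed
  have rho1: "l1 rho = 1" unfolding l1_def using rho_nonneg rho_sum by simp
  define N where "N i = norm_i (AS i) (\<lambda>s b. vgrad AS P r rho i pol s b - vgrad AS P r rho i pol' s b)" for i
  have part1: "N i \<le> 3 * sqrt (real (card (AS i))) / z ^ 3 * Dt" for i
  proof -
    interpret two AS P "r i" pol pol' Dt
      by unfold_locales (use r_bound pol pol' Ds in auto)
    show ?thesis unfolding N_def by (rule final_i[of r i rho, OF refl rho_nonneg rho1])
  qed
  define nall where "nall = norm_all AS (\<lambda>i s b. pol i s b - pol' i s b)"
  define A where "A = (\<Sum>i\<in>UNIV. real (card (AS i)))"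
  have A_nn: "0 \<le> A" unfolding A_def by (auto intro!: sum_nonneg)
  have nd_nn: "0 \<le> nd j" for j unfolding nd_def norm_i_def by (auto intro!: sum_nonneg)
  have Dt_nn: "0 \<le> Dt" unfolding Dt_def using nd_nn by (auto intro!: sum_nonneg)
  have nall_sq: "nall = sqrt (\<Sum>j\<in>UNIV. (nd j)\<^sup>2)"
    unfolding nall_def nd_def norm_all_def norm_i_def by (simp add: sum_nonneg)
  have DtA: "Dt \<le> sqrt A * nall"
  proof -
    have "Dt = (\<Sum>j\<in>UNIV. \<bar>sqrt (real (card (AS j)))\<bar> * \<bar>nd j\<bar>)" unfolding Dt_def using nd_nn by simp
    also have "\<dots> \<le> L2_set (\<lambda>j. sqrt (real (card (AS j)))) UNIV * L2_set nd UNIV" by (rule L2_set_mult_ineq)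
    also have "\<dots> = sqrt A * nall" unfolding nall_sq L2_set_def A_def by simp
    finally show ?thesis .
  qed
  have Nsq: "(N i)\<^sup>2 \<le> 9 * real (card (AS i)) * A * nall\<^sup>2 / z ^ 6" for i
  proof -
    have N_nn: "0 \<le> N i" unfolding N_def norm_i_def by (auto intro!: sum_nonneg)
    have "N i \<le> 3 * sqrt (real (card (AS i))) / z ^ 3 * (sqrt A * nall)"
    proof -
      have c_nn: "0 \<le> 3 * sqrt (real (card (AS i))) / z ^ 3" using z_facts by simp
      show ?thesis using order_trans[OF part1[of i] mult_left_mono[OF DtA c_nn]] .
    qed
    hence "(N i)\<^sup>2 \<le> (3 * sqrt (real (card (AS i))) / z ^ 3 * (sqrt A * nall))\<^sup>2"
      using N_nn by (intro power_mono) auto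
    also have "\<dots> = 9 * real (card (AS i)) * A * nall\<^sup>2 / z ^ 6"
      using A_nn z_facts by (intro t1) auto
    finally show ?thesis .
  qed
  have part2: "norm_all AS (\<lambda>i s b. vgrad AS P r rho i pol s b - vgrad AS P r rho i pol' s b) \<le> 3 * A / z ^ 3 * nall"
  proof -
    have "norm_all AS (\<lambda>i s b. vgrad AS P r rho i pol s b - vgrad AS P r rho i pol' s b) = sqrt (\<Sum>i\<in>UNIV. (N i)\<^sup>2)"
      unfolding norm_all_def N_def norm_i_def by (simp add: sum_nonneg)
    also have "\<dots> \<le> sqrt (\<Sum>i\<in>UNIV. 9 * real (card (AS i)) * A * nall\<^sup>2 / z ^ 6)"
      by (intro real_sqrt_le_mono sum_mono Nsq)
    also have "(\<Sum>i\<in>UNIV. 9 * real (card (AS i)) * A * nall\<^sup>2 / z ^ 6) = (3 * A / z ^ 3 * nall)\<^sup>2"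
      by (rule t2) (simp add: A_def)
    also have "sqrt \<dots> = 3 * A / z ^ 3 * nall"
    proof -
      have "0 \<le> nall" unfolding nall_def norm_all_def by (auto intro!: sum_nonneg)
      hence "0 \<le> 3 * A / z ^ 3 * nall" using A_nn z_facts by simp
      thus ?thesis by (simp only: real_sqrt_abs abs_of_nonneg)
    qed
    finally show ?thesis .
  qed
  have Areal: "A = real (\<Sum>i\<in>UNIV. card (AS i))" unfolding A_def by simp
  show ?thesis
  proof (intro conjI allI)
    fix i
    show "norm_i (AS i) (\<lambda>s b. vgrad AS P r rho i pol s b - vgrad AS P r rho i pol' s b)
              \<le> 3 * sqrt (real (card (AS i))) / (zeta_min AS P) ^ 3
                 * (\<Sum>j\<in>UNIV. sqrt (real (card (AS j))) * norm_i (AS j) (\<lambda>s b. pol j s b - pol' j s b))"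
      using part1[of i] unfolding N_def Dt_def nd_def .
  next
    show "norm_all AS (\<lambda>i s b. vgrad AS P r rho i pol s b - vgrad AS P r rho i pol' s b)
              \<le> 3 * real (\<Sum>i\<in>UNIV. card (AS i)) / (zeta_min AS P) ^ 3
                 * norm_all AS (\<lambda>i s b. pol i s b - pol' i s b)"
      using part2 unfolding Areal nall_def .
  qed
qed


end
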